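(* Assume the setting of the context. Then for all sufficiently small $\epsilon>0$ and every $\sigma\in\Sigma$ (writing $Q=Q^\epsilon_\sigma$, $D=D_{\kappa_\sigma}$), for $x\in\mathbb{R}\cup\{\infty\}$: (i) if $x\notin[0,\infty)$ then $Q\cdot(D\cdot x)\notin[\widetilde{x}_-,\infty)$; (ii) if $x\notin[\widetilde{x}_-,\infty)$ then $Q\cdot(D\cdot x)\notin[\widetilde{x}_c,\infty)$; (iii) if $Q\cdot(D\cdot x)\notin[0,\infty)$ then $x\notin[0,\widetilde{x}_+)$.
   Context: Let $(\Sigma,\mathbf{p})$ be a probability space. For each $\sigma\in\Sigma$ and $\epsilon\in[-1,1]$ let real numbers $a_\sigma,b_\sigma$, $\kappa_\sigma>0$ and $\alpha^\epsilon_\sigma,\beta^\epsilon_\sigma,\gamma^\epsilon_\sigma,\delta^\epsilon_\sigma$ be given, with $A^\epsilon_\sigma=\begin{pmatrix}\alpha^\epsilon_\sigma&\beta^\epsilon_\sigma\\ \gamma^\epsilon_\sigma&\delta^\epsilon_\sigma\end{pmatrix}$. Assume that for all $\sigma$: $|\log(\kappa_\sigma)|\le C_0$, $a_\sigma-|b_\sigma|\ge C_1$, $a_\sigma+|b_\sigma|\le C_2$, and $\|A^\epsilon_\sigma\|\le C_3$ for $|\epsilon|\le1$, with constants $C_0,C_1,C_2,C_3\in(0,\infty)$. On $\mathbb{R}\cup\{\infty\}$ define $D_{\kappa}\cdot x=\kappa^2x$ and $$Q^\epsilon_\sigma\cdot x=\frac{(1+\epsilon^2\alpha^\epsilon_\sigma)x+(a_\sigma-b_\sigma-\epsilon\beta^\epsilon_\sigma)\epsilon}{1+\epsilon^2\delta^\epsilon_\sigma-(a_\sigma+b_\sigma+\epsilon\gamma^\epsilon_\sigma)\epsilon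 x}.$$ Let $\lambda=\lambda(\epsilon)>0$ be a function of $\epsilon>0$ with $\lim_{\epsilon\to0}\lambda=0$ and $\lim_{\epsilon\to0}\frac{\log(\lambda)}{\log(\epsilon)}=0$, and set $\Lambda=e^{2C_0\lambda}$. Put $A=\Lambda(C_2+C_3\epsilon)\epsilon$, $B=\Lambda-1-C_3\epsilon^2(\Lambda+1)$, $C=(C_2+C_3\epsilon)\epsilon$, and $$\widetilde{x}_-=e^{2C_0}\frac{(B^2+4AC)\,C}{B^3},\qquad \widetilde{x}_+=e^{-2C_0}\frac{B^2-2AC}{AB},\qquad \widetilde{x}_c=e^{2C_0}\Lambda\,\widetilde{x}_-.$$ *)

theory Defs
  imports "HOL-Analysis.Analysis"
begin

text \<open>The projective real line R \<union> {\<infinity>}: None stands for \<infinity>.\<close>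
type_synonym ereal_proj = "real option"

definition mobius :: "real \<Rightarrow> real \<Rightarrow> real \<Rightarrow> real \<Rightarrow> real option \<Rightarrow> real option" where
  "mobius p q r s x =
     (case x of
        None \<Rightarrow> (if r = 0 then None else Some (p / r))
      | Some y \<Rightarrow> (if r * y + s = 0 then None else Some ((p * y + q) / (r * y + s))))"

definition Dact :: "real \<Rightarrow> real option \<Rightarrow> real option" where
  "Dact \<kappa> x = mobius (\<kappa>\<^sup>2) 0 0 1 x"

definition Qact :: "real \<Rightarrow> real \<Rightarrow> real \<Rightarrow> real \<Rightarrow> real \<Rightarrow> real \<Rightarrow> real \<Rightarrow> real option \<Rightarrow> real option" where
  "Qact \<epsilon> a b \<alpha> \<beta> \<gamma> \<delta> (x :: real option) =
     mobius (1 + \<epsilon>\<^sup>2 * \<alpha>) ((a - b - \<epsilon> * \<beta>) * \<epsilon>)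
            (- ((a + b + \<epsilon> * \<gamma>) * \<epsilon>)) (1 + \<epsilon>\<^sup>2 * \<delta>) x"

definition in_Ici :: "real \<Rightarrow> real option \<Rightarrow> bool" where
  "in_Ici lo x = (case x of None \<Rightarrow> False | Some y \<Rightarrow> lo \<le> y)"

definition in_Ico :: "real \<Rightarrow> real \<Rightarrow> real option \<Rightarrow> bool" where
  "in_Ico lo hi x = (case x of None \<Rightarrow> False | Some y \<Rightarrow> lo \<le> y \<and> y < hi)"

definition mat2_norm :: "real \<Rightarrow> real \<Rightarrow> real \<Rightarrow> real \<Rightarrow> real" where
  "mat2_norm p q r s = onorm (\<lambda>v :: real \<times> real. (p * fst v + q * snd v, r * fst v + s * snd v))"

end

theory Submission
  imports Defs
begin



lemma mat2_entries:
  assumes "mat2_norm p q r s \<le> c"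
  shows "\<bar>p\<bar> \<le> c \<and> \<bar>q\<bar> \<le> c \<and> \<bar>r\<bar> \<le> c \<and> \<bar>s\<bar> \<le> c"
proof -
  define f where "f = (\<lambda>v :: real \<times> real. (p * fst v + q * snd v, r * fst v + s * snd v))"
  have "linear f" unfolding f_def by (rule linearI) (auto simp: algebra_simps)
  hence bl: "bounded_linear f" by (simp add: linear_conv_bounded_linear)
  have o: "onorm f \<le> c" using assms by (simp add: mat2_norm_def f_def)
  have n1: "norm (1::real, 0::real) = 1" "norm (0::real, 1::real) = 1" by (simp_all add: norm_Pair)
  have a: "norm (f (1,0)) \<le> c" using onorm[OF bl, of "(1,0)"] o n1 by simp
  have b: "norm (f (0,1)) \<le> c" using onorm[OF bl, of "(0,1)"] o n1 by simp
  have "\<bar>p\<bar> \<le> norm (f (1,0))" "\<bar>r\<bar> \<le> norm (f (1,0))"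
       "\<bar>q\<bar> \<le> norm (f (0,1))" "\<bar>s\<bar> \<le> norm (f (0,1))"
    by (simp_all add: f_def norm_Pair real_sqrt_ge_abs1 real_sqrt_ge_abs2)
  thus ?thesis using a b by linarith
qed



lemma core:
  fixes e L E C0 C1 C2 C3 a b kap al be ga de A B C xm xp xc :: real
  assumes e: "0 < e" "e \<le> 1" "C3 * e < C1" "C3 * e\<^sup>2 \<le> 1/2"
    and EE: "E = exp (2 * C0)" "C0 > 0" and L: "L \<ge> 1"
    and ent: "\<bar>al\<bar> \<le> C3" "\<bar>be\<bar> \<le> C3" "\<bar>ga\<bar> \<le> C3" "\<bar>de\<bar> \<le> C3"
    and ab: "a - \<bar>b\<bar> \<ge> C1" "a + \<bar>b\<bar> \<le> C2" and C1: "C1 > 0"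
    and kap: "kap > 0" "\<bar>ln kap\<bar> \<le> C0"
    and defs: "A = L * (C2 + C3 * e) * e" "B = L - 1 - C3 * e\<^sup>2 * (L + 1)"
              "C = (C2 + C3 * e) * e"
              "xm = exp (2 * C0) * ((B\<^sup>2 + 4 * A * C) * C) / B ^ 3"
              "xp = exp (- 2 * C0) * (B\<^sup>2 - 2 * A * C) / (A * B)"
              "xc = exp (2 * C0) * L * xm"
    and B: "B > 0" "B \<le> 1/2"
    and t: "4 * A * C / B\<^sup>2 \<le> 1" "4 * A * C / B\<^sup>2 \<le> (E\<^sup>2 - 1) / E ^ 4"
  shows "(let y = Qact e a b al be ga de (Dact kap x)
           in (\<not> in_Ici 0 x \<longrightarrow> \<not> in_Ici xm y)
            \<and> (\<not> in_Ici xm x \<longrightarrow> \<not> in_Ici xc y)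
            \<and> (\<not> in_Ici 0 y \<longrightarrow> \<not> in_Ico 0 xp x))"
proof -
  define p where "p = 1 + e\<^sup>2 * al"
  define q where "q = (a - b - e * be) * e"
  define r where "r = - ((a + b + e * ga) * e)"
  define s where "s = 1 + e\<^sup>2 * de"
  have Q: "Qact e a b al be ga de z = mobius p q r s z" for z
    by (simp add: Qact_def p_def q_def r_def s_def)
  have e2: "e\<^sup>2 > 0" using e by simp
  have "\<bar>e\<^sup>2 * al\<bar> \<le> e\<^sup>2 * C3" "\<bar>e\<^sup>2 * de\<bar> \<le> e\<^sup>2 * C3"
    using ent e2 by (simp_all add: abs_mult mult_left_mono)
  hence "- (e\<^sup>2 * C3) \<le> e\<^sup>2 * al" "e\<^sup>2 * al \<le> e\<^sup>2 * C3" "- (e\<^sup>2 * C3) \<le> e\<^sup>2 * de"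
    by (simp_all add: abs_le_iff)
  hence ps: "p \<ge> 1/2" "s \<ge> 1/2" "s \<ge> 1 - C3 * e\<^sup>2" "p \<le> 1 + C3 * e\<^sup>2"
    using e unfolding p_def s_def by (simp_all add: mult.commute)
  have "\<bar>e * be\<bar> \<le> C3 * e" "\<bar>e * ga\<bar> \<le> C3 * e"
    using ent e by (simp_all add: abs_mult mult.commute mult_left_mono)
  hence h1: "a - b - e * be \<ge> C1 - C3 * e" "a - b - e * be \<le> C2 + C3 * e"
     "a + b + e * ga \<ge> C1 - C3 * e" "a + b + e * ga \<le> C2 + C3 * e"
    using ab by auto
  have qr: "q > 0" "q \<le> C" "r < 0" "- r \<le> C"
    using h1 e unfolding q_def r_def defs
    by (auto intro: mult_pos_pos mult_right_mono)
  have C: "C > 0" using qr by linarith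
  have A1: "A = L * C" using defs(1,3) by simp
  have A: "A = L * C" "A > 0" using A1 L C by auto
  have det: "p * s - q * r > 0"
  proof -
    have "p * s > 0" using ps by simp
    moreover have "q * r < 0" using qr by (simp add: mult_pos_neg)
    ultimately show ?thesis by linarith
  qed
  have E1: "E > 1" using EE by simp
  have kap2: "kap\<^sup>2 \<le> E" "kap\<^sup>2 > 0"
  proof -
    have "kap\<^sup>2 = exp (2 * ln kap)" using kap by (simp only: exp_double exp_ln)
    also have "\<dots> \<le> E" using kap EE by simp
    finally show "kap\<^sup>2 \<le> E" .
    show "kap\<^sup>2 > 0" using kap by simp
  qed
  define tt where "tt = 4 * A * C / B\<^sup>2"
  define k where "k = E\<^sup>2"
  have tt0: "tt \<ge> 0" using A C B unfolding tt_def by simp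
  have k1: "k > 1" using E1 unfolding k_def by (simp add: one_less_power)
  have ACB: "A * C / B\<^sup>2 = tt / 4" unfolding tt_def by simp
  have xmge: "xm \<ge> E * C / B"
  proof -
    have "(B\<^sup>2 + 4 * A * C) * C / B ^ 3 \<ge> B\<^sup>2 * C / B^3"
      using A C B by (intro divide_right_mono mult_right_mono) auto
    also have "B\<^sup>2 * C / B^3 = C / B" using B by (simp add: power2_eq_square power3_eq_cube)
    finally have "C / B \<le> (B\<^sup>2 + 4 * A * C) * C / B ^ 3" .
    hence h: "E * (C / B) \<le> E * ((B\<^sup>2 + 4 * A * C) * C / B ^ 3)" using E1 by (intro mult_left_mono) auto
    moreover have "xm = E * ((B\<^sup>2 + 4 * A * C) * C / B ^ 3)" unfolding defs(4) EE(1) by simp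
    moreover have "E * C / B = E * (C / B)" by simp
    ultimately show ?thesis by linarith
  qed
  have xm2C: "xm > 2 * C"
  proof -
    have "C / B \<ge> 2 * C" using B C by (simp add: field_simps)
    moreover have "E * C / B > C / B" using E1 B C by (simp add: divide_strict_right_mono)
    ultimately show ?thesis using xmge by linarith
  qed
  have xmpos: "xm > 0" using xm2C C by linarith
  have EL: "1 \<le> E * L" using mult_mono[of 1 E 1 L] E1 L by simp
  have xcxm: "xc \<ge> xm"
  proof -
    have "xc = (E * L) * xm" using defs(6) EE by simp
    also have "\<dots> \<ge> 1 * xm" using EL xmpos by (intro mult_right_mono) auto
    finally show ?thesis by simp
  qed
  define U where "U = E * xm"
  have U: "U = k * C * (1 + tt) / B"
  proof -
    have f: "(B\<^sup>2 + 4 * A * C) / B ^ 3 = (1 + tt) / B"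
      unfolding tt_def using B by (simp add: field_simps power2_eq_square power3_eq_cube)
    have "U = E * E * C * ((B\<^sup>2 + 4 * A * C) / B ^ 3)"
      unfolding U_def defs(4) EE(1)[symmetric] by simp
    hence "U = E * E * C * ((1 + tt) / B)" unfolding f .
    thus ?thesis unfolding k_def power2_eq_square by simp
  qed
  have Upos: "U > 0" using U_def E1 xmpos by simp
  have xcU: "xc = L * U" using defs(6) EE unfolding U_def by simp
  have ttk: "tt \<le> (k - 1) / k\<^sup>2" "tt \<le> 1" using t unfolding tt_def k_def by simp_all
  have k2tt: "k\<^sup>2 * tt \<le> k - 1" using ttk k1 by (simp add: field_simps)
  have ktt: "k * tt < 1"
  proof -
    have "k * (k * tt) \<le> k - 1" using k2tt by (simp add: power2_eq_square mult.assoc)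
    hence "k * (k * tt) < k * 1" by simp
    thus ?thesis using k1 by (subst (asm) mult_less_cancel_left_pos) auto
  qed
  have "(1 + tt)\<^sup>2 \<le> 2\<^sup>2" by (rule power_mono) (use ttk tt0 in auto)
  hence tt4: "(1 + tt)\<^sup>2 \<le> 4" by simp
  have quad: "B * U - A * U\<^sup>2 - C \<ge> 0"
  proof -
    have q1: "B * U = k * C * (1 + tt)" using U B by simp
    have "A * U\<^sup>2 = k\<^sup>2 * (1 + tt)\<^sup>2 * C * (A * C / B\<^sup>2)"
      unfolding U using B by (simp add: field_simps power2_eq_square)
    hence q2: "A * U\<^sup>2 = (k\<^sup>2 * ((1 + tt)\<^sup>2 * tt / 4)) * C" unfolding ACB by simp
    have "(1 + tt)\<^sup>2 * tt / 4 \<le> tt" using tt4 tt0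
      using mult_right_mono[OF tt4 tt0] by simp
    hence "k\<^sup>2 * ((1 + tt)\<^sup>2 * tt / 4) \<le> k - 1" using k2tt
      by (meson k1 mult_left_mono order_trans zero_le_power2)
    hence "A * U\<^sup>2 \<le> (k - 1) * C" unfolding q2 using C by (simp add: mult_right_mono)
    moreover have "k * C * (1 + tt) \<ge> k * C" using k1 C tt0 by simp
    ultimately show ?thesis using q1 by (simp add: algebra_simps)
  qed
  have CU: "C * U < 1/2"
  proof -
    have "C * C \<le> A * C" using A L C by (simp add: mult_right_mono)
    hence "C\<^sup>2 / B\<^sup>2 \<le> tt / 4" using B unfolding ACB[symmetric]
      by (simp add: power2_eq_square divide_right_mono)
    hence a: "k * (1 + tt) * (C\<^sup>2 / B\<^sup>2) \<le> k * 2 * (tt / 4)"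
      using k1 tt0 ttk by (intro mult_mono) auto
    have "C * U = k * (1 + tt) * (C\<^sup>2 / B\<^sup>2) * B" unfolding U using B by (simp add: field_simps power2_eq_square)
    also have "\<dots> \<le> k * 2 * (tt / 4) * B" using a B by (intro mult_right_mono) auto
    also have "\<dots> \<le> k * 2 * (tt / 4) * 1" using B k1 tt0 by (intro mult_left_mono) auto
    finally show ?thesis using ktt by simp
  qed
  have Dn: "Dact kap None = None" by (simp add: Dact_def mobius_def)
  have Ds: "Dact kap (Some x0) = Some (kap\<^sup>2 * x0)" for x0 by (simp add: Dact_def mobius_def)
  have Qn: "mobius p q r s None = Some (p / r)" using qr by (simp add: mobius_def)
  have pr: "p / r < 0" using ps qr by (simp add: divide_pos_neg)
  have xcpos: "xc > 0" using xcxm xmpos by linarith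
  have Qs: "mobius p q r s (Some u) = Some ((p * u + q) / (r * u + s))" if "r * u + s > 0" for u
    using that by (simp add: mobius_def)
  have neg: "r * u + s > 0 \<and> (p * u + q) / (r * u + s) < xm" if "u < 0" for u
  proof -
    have ru: "r * u > 0" using that qr by (simp add: mult_neg_neg)
    hence den: "r * u + s > 0" using ps by linarith
    have "u * (p * s - q * r) < 0" using that det by (simp add: mult_neg_pos)
    hence "(p * u + q) * s < q * (r * u + s)" by (simp add: algebra_simps)
    hence "(p * u + q) / (r * u + s) < q / s" using den ps by (simp add: field_simps)
    also have "q / s \<le> q / (1/2)" using qr ps by (intro divide_left_mono) auto
    also have "\<dots> \<le> 2 * C" using qr by simp
    finally show ?thesis using den xm2C by simp
  qed
  show ?thesis
  proof (cases x)
    case None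
    thus ?thesis using Qn pr xmpos xcpos by (simp add: Q Dn in_Ici_def in_Ico_def Let_def)
  next
    case (Some x0)
    define u where "u = kap\<^sup>2 * x0"
    have y: "Qact e a b al be ga de (Dact kap x) = mobius p q r s (Some u)"
      using Some by (simp add: Q Ds u_def)
    have P1: "\<not> in_Ici xm (mobius p q r s (Some u))" if "x0 < 0"
    proof -
      have "u < 0" using that kap2 by (simp add: u_def mult_pos_neg)
      thus ?thesis using neg[of u] Qs[of u] by (simp add: in_Ici_def)
    qed
    have P2: "\<not> in_Ici xc (mobius p q r s (Some u))" if "x0 < xm"
    proof (cases "x0 < 0")
      case True
      have "u < 0" using True kap2 by (simp add: u_def mult_pos_neg)
      thus ?thesis using neg[of u] Qs[of u] xcxm by (simp add: in_Ici_def)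
    next
      case False
      have u0: "u \<ge> 0" using False kap2 by (simp add: u_def)
      have "u \<le> E * x0" unfolding u_def using kap2 False by (simp add: mult_right_mono)
      also have "E * x0 < U" unfolding U_def using E1 that by simp
      finally have uU: "u < U" .
      have "r * u \<ge> - C * u" using mult_right_mono[of "-C" r u] qr u0 by simp
      moreover have "C * u \<le> C * U" using uU C by simp
      ultimately have den: "r * u + s > 0" using CU ps by linarith
      have f1: "L * U * (r * u + s) - p * u - q - (L * U * (r * U + s) - p * U - q) = (U - u) * (p - L * U * r)"
        by (simp add: algebra_simps)
      have "L * U * r < 0" using L Upos qr by (simp add: mult_pos_neg)
      hence "(U - u) * (p - L * U * r) > 0" using uU ps by simp
      hence f2: "L * U * (r * u + s) - p * u - q > L * U * (r * U + s) - p * U - q" using f1 by linarith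
      have LU: "L * U > 0" using L Upos by simp
      have "L * U * (r * U + s) \<ge> L * U * ((1 - C3 * e\<^sup>2) - C * U)"
      proof -
        have "r * U \<ge> - C * U" using mult_right_mono[of "-C" r U] qr Upos by simp
        hence "r * U + s \<ge> (1 - C3 * e\<^sup>2) - C * U" using ps by linarith
        thus ?thesis using LU by (simp add: mult_left_mono)
      qed
      moreover have "p * U \<le> (1 + C3 * e\<^sup>2) * U" using ps Upos by (simp add: mult_right_mono)
      moreover have "L * U * ((1 - C3 * e\<^sup>2) - C * U) - (1 + C3 * e\<^sup>2) * U - C = B * U - A * U\<^sup>2 - C"
        unfolding defs(2) A(1) by (simp add: algebra_simps power2_eq_square)
      ultimately have "L * U * (r * U + s) - p * U - q \<ge> 0" using quad qr by linarith
      with f2 have "p * u + q < L * U * (r * u + s)" by linarith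
      hence "(p * u + q) / (r * u + s) < xc" unfolding xcU using den by (simp add: field_simps)
      thus ?thesis using Qs[OF den] by (simp add: in_Ici_def)
    qed
    have P3: "in_Ici 0 (mobius p q r s (Some u))" if "0 \<le> x0" "x0 < xp"
    proof -
      define W where "W = (B\<^sup>2 - 2 * A * C) / (A * B)"
      have ee: "E * exp (- 2 * C0) = 1" unfolding EE(1) by (simp add: exp_add[symmetric])
      have "E * xp = (E * exp (- 2 * C0)) * ((B\<^sup>2 - 2 * A * C) / (A * B))"
        unfolding defs(5) by simp
      hence EW: "E * xp = W" unfolding ee W_def by simp
      have u0: "u \<ge> 0" using that kap2 by (simp add: u_def)
      have "u \<le> E * x0" unfolding u_def using kap2 that by (simp add: mult_right_mono)
      also have "E * x0 < W" unfolding EW[symmetric] using E1 that by simp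
      finally have uW: "u < W" .
      have "C * W \<le> C * (B\<^sup>2 / (A * B))" unfolding W_def using A C B
        by (intro mult_left_mono divide_right_mono) auto
      also have "C * (B\<^sup>2 / (A * B)) = B / L" using A B C L by (simp add: field_simps power2_eq_square)
      also have "B / L \<le> B" using B L by (simp add: divide_le_eq mult_le_cancel_left1)
      finally have CW: "C * W \<le> 1/2" using B by linarith
      have "r * u \<ge> - C * u" using mult_right_mono[of "-C" r u] qr u0 by simp
      moreover have "C * u < C * W" using uW C by simp
      ultimately have den: "r * u + s > 0" using CW ps by linarith
      have "p * u + q \<ge> 0" using ps qr u0 by simp
      thus ?thesis using Qs[OF den] den by (simp add: in_Ici_def)
    qed
    show ?thesis using Some y P1 P2 P3 by (auto simp: Let_def in_Ici_def in_Ico_def)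
  qed
qed


lemma pt:
  fixes e l C0 C1 C2 C3 E K L A B C :: real
  assumes C: "C0 > 0" "C1 > 0" "C2 > 0" "C3 > 0"
    and e: "0 < e" "e < 1" "e < C1 / C3" "e < 1 / (2 * C3)" "e < 2 * C0 / (5 * C3)"
    and eK: "e < min 1 ((E\<^sup>2 - 1) / E ^ 4) / K"
    and KE: "K = 6 * (C2 + C3)\<^sup>2 / C0\<^sup>2" "E = exp (2 * C0)"
    and l: "l > 0" "l < ln (3/2) / (2 * C0)" "ln l / ln e < 1/2"
    and defs: "L = exp (2 * C0 * l)" "A = L * (C2 + C3 * e) * e" "B = L - 1 - C3 * e\<^sup>2 * (L + 1)"
              "C = (C2 + C3 * e) * e"
  shows "C3 * e < C1" "C3 * e\<^sup>2 \<le> 1/2" "L \<ge> 1" "B > 0" "B \<le> 1/2"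
        "4 * A * C / B\<^sup>2 \<le> 1" "4 * A * C / B\<^sup>2 \<le> (E\<^sup>2 - 1) / E ^ 4"
proof -
  show "C3 * e < C1" using e C by (simp add: field_simps)
  have ee: "e\<^sup>2 \<le> e" using e by (simp add: power2_eq_square mult_le_cancel_left1)
  have "C3 * e\<^sup>2 \<le> C3 * e" using ee C by simp
  also have "C3 * e \<le> 1/2" using e C by (simp add: field_simps)
  finally show c32: "C3 * e\<^sup>2 \<le> 1/2" .
  have L1: "L \<ge> 1 + 2 * C0 * l" unfolding defs(1) by (rule exp_ge_add_one_self)
  moreover have "2 * C0 * l > 0" using C l by simp
  ultimately show "L \<ge> 1" by linarith
  have "2 * C0 * l < ln (3/2)" using l C by (simp add: field_simps)
  hence L32: "L < 3/2" unfolding defs(1) by (metis exp_less_cancel_iff exp_ln zero_less_divide_iff zero_less_numeral)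
  have Bub: "B \<le> L - 1" unfolding defs(3) using C \<open>L \<ge> 1\<close> e by simp
  thus "B \<le> 1/2" using L32 by simp
  have lne: "ln e < 0" using e by simp
  have "ln l > ln e / 2" using l(3) lne by (simp add: divide_less_eq field_simps)
  hence "2 * ln l > ln e" by simp
  hence "exp (2 * ln l) > exp (ln e)" by simp
  hence l2: "l\<^sup>2 > e" using l e by (simp add: exp_double)
  have le: "l > e"
  proof (rule ccontr)
    assume "\<not> l > e"
    hence "l\<^sup>2 \<le> e\<^sup>2" using l by (simp add: power_mono)
    thus False using l2 ee by linarith
  qed
  have "C3 * e\<^sup>2 * (L + 1) \<le> C3 * e\<^sup>2 * (5/2)" using L32 C by (simp add: mult_left_mono)
  also have "C3 * e\<^sup>2 * (5/2) \<le> C0 * e"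
  proof -
    have "C3 * e * (5/2) \<le> C0" using e C by (simp add: field_simps)
    hence "C3 * e * (5/2) * e \<le> C0 * e" using e by (simp add: mult_right_mono)
    thus ?thesis by (simp add: power2_eq_square algebra_simps)
  qed
  finally have "B \<ge> 2 * C0 * l - C0 * e" unfolding defs(3) using L1 by linarith
  moreover have "C0 * e < C0 * l" using le C by simp
  ultimately have Bl: "B \<ge> C0 * l" by linarith
  moreover have "C0 * l > 0" using C l by simp
  ultimately show Bpos: "B > 0" by linarith
  have B2: "B\<^sup>2 \<ge> C0\<^sup>2 * e"
  proof -
    have "B\<^sup>2 \<ge> (C0 * l)\<^sup>2" using Bl C l by (simp add: power_mono)
    moreover have "(C0 * l)\<^sup>2 \<ge> C0\<^sup>2 * e" using l2 C by (simp add: power_mult_distrib)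
    ultimately show ?thesis by linarith
  qed
  have Cb: "C \<le> (C2 + C3) * e" "C \<ge> 0" unfolding defs(4) using e C by (auto intro!: mult_right_mono)
  have Ab: "A \<le> (3/2) * ((C2 + C3) * e)" "A \<ge> 0"
  proof -
    have "A = L * C" unfolding defs(2,4) by simp
    moreover have "L * C \<le> (3/2) * ((C2 + C3) * e)" using L32 Cb \<open>L \<ge> 1\<close>
      by (intro mult_mono) auto
    ultimately show "A \<le> (3/2) * ((C2 + C3) * e)" by simp
    show "A \<ge> 0" using \<open>A = L * C\<close> Cb \<open>L \<ge> 1\<close> by simp
  qed
  have "4 * A * C \<le> 4 * ((3/2) * ((C2 + C3) * e)) * ((C2 + C3) * e)"
    using Ab Cb e C by (intro mult_mono) auto
  also have "\<dots> = (K * e) * (C0\<^sup>2 * e)" unfolding KE using C by (simp add: field_simps power2_eq_square)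
  finally have "4 * A * C / B\<^sup>2 \<le> (K * e) * (C0\<^sup>2 * e) / B\<^sup>2" using Bpos by (simp add: divide_right_mono)
  also have "\<dots> \<le> (K * e) * (C0\<^sup>2 * e) / (C0\<^sup>2 * e)"
    using B2 C e KE Bpos by (intro divide_left_mono) auto
  also have "\<dots> = K * e" using C e by simp
  also have "K * e \<le> min 1 ((E\<^sup>2 - 1) / E ^ 4)"
  proof -
    have "K > 0" using KE C by simp
    thus ?thesis using eK by (simp add: field_simps)
  qed
  finally show "4 * A * C / B\<^sup>2 \<le> 1" "4 * A * C / B\<^sup>2 \<le> (E\<^sup>2 - 1) / E ^ 4" by simp_all
qed
theorem lemma7:
  fixes a b \<kappa> :: "'s \<Rightarrow> real"
    and \<alpha> \<beta> \<gamma> \<delta> :: "real \<Rightarrow> 's \<Rightarrow> real"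
    and C0 C1 C2 C3 :: real
    and lam :: "real \<Rightarrow> real"
  assumes C_pos: "C0 > 0" "C1 > 0" "C2 > 0" "C3 > 0"
    and kappa_pos: "\<And>\<sigma>. \<kappa> \<sigma> > 0"
    and kappa_bd: "\<And>\<sigma>. \<bar>ln (\<kappa> \<sigma>)\<bar> \<le> C0"
    and ab_lower: "\<And>\<sigma>. a \<sigma> - \<bar>b \<sigma>\<bar> \<ge> C1"
    and ab_upper: "\<And>\<sigma>. a \<sigma> + \<bar>b \<sigma>\<bar> \<le> C2"
    and A_bd: "\<And>\<sigma> \<epsilon>. \<bar>\<epsilon>\<bar> \<le> 1 \<Longrightarrow>
                 mat2_norm (\<alpha> \<epsilon> \<sigma>) (\<beta> \<epsilon> \<sigma>) (\<gamma> \<epsilon> \<sigma>) (\<delta> \<epsilon> \<sigma>) \<le> C3"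
    and lam_pos: "\<And>\<epsilon>. \<epsilon> > 0 \<Longrightarrow> lam \<epsilon> > 0"
    and lam_lim: "(lam \<longlongrightarrow> 0) (at_right 0)"
    and lam_log: "((\<lambda>\<epsilon>. ln (lam \<epsilon>) / ln \<epsilon>) \<longlongrightarrow> 0) (at_right 0)"
  shows "\<exists>\<epsilon>0>0. \<forall>\<epsilon>. 0 < \<epsilon> \<and> \<epsilon> < \<epsilon>0 \<longrightarrow>
    (let \<Lambda> = exp (2 * C0 * lam \<epsilon>);
         A = \<Lambda> * (C2 + C3 * \<epsilon>) * \<epsilon>;
         B = \<Lambda> - 1 - C3 * \<epsilon>\<^sup>2 * (\<Lambda> + 1);
         C = (C2 + C3 * \<epsilon>) * \<epsilon>;
         xm = exp (2 * C0) * ((B\<^sup>2 + 4 * A * C) * C) / B ^ 3;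
         xp = exp (- 2 * C0) * (B\<^sup>2 - 2 * A * C) / (A * B);
         xc = exp (2 * C0) * \<Lambda> * xm
     in \<forall>\<sigma> x.
          (let y = Qact \<epsilon> (a \<sigma>) (b \<sigma>) (\<alpha> \<epsilon> \<sigma>) (\<beta> \<epsilon> \<sigma>) (\<gamma> \<epsilon> \<sigma>) (\<delta> \<epsilon> \<sigma>)
                        (Dact (\<kappa> \<sigma>) x)
           in (\<not> in_Ici 0 x \<longrightarrow> \<not> in_Ici xm y)
            \<and> (\<not> in_Ici xm x \<longrightarrow> \<not> in_Ici xc y)
            \<and> (\<not> in_Ici 0 y \<longrightarrow> \<not> in_Ico 0 xp x)))"
  proof -
  define E where "E = exp (2 * C0)"
  define K where "K = 6 * (C2 + C3)\<^sup>2 / C0\<^sup>2"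
  define m where "m = min 1 ((E\<^sup>2 - 1) / E ^ 4)"
  define c0 where "c0 = min (min 1 (C1 / C3)) (min (1 / (2 * C3)) (min (2 * C0 / (5 * C3)) (m / K)))"
  have E1: "E > 1" unfolding E_def using C_pos by simp
  have "E\<^sup>2 > 1" using E1 by (simp add: one_less_power)
  hence mpos: "m > 0" unfolding m_def using E1 by simp
  have Kpos: "K > 0" unfolding K_def using C_pos by simp
  have c0pos: "c0 > 0" unfolding c0_def using C_pos mpos Kpos by simp
  have ev1: "eventually (\<lambda>e. lam e < ln (3/2) / (2 * C0)) (at_right 0)"
    using order_tendstoD(2)[OF lam_lim] C_pos by simp
  have ev2: "eventually (\<lambda>e. ln (lam e) / ln e < 1/2) (at_right 0)"
    using order_tendstoD(2)[OF lam_log, of "1/2"] by simp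
  have ev3: "eventually (\<lambda>e. e < c0) (at_right 0)"
    unfolding eventually_at_right_field using c0pos by auto
  have "eventually (\<lambda>e. lam e < ln (3/2) / (2 * C0) \<and> ln (lam e) / ln e < 1/2 \<and> e < c0) (at_right 0)"
    using ev1 ev2 ev3 by eventually_elim auto
  then obtain bb where bb: "bb > 0" and hb: "\<And>e. e > 0 \<Longrightarrow> e < bb \<Longrightarrow>
      lam e < ln (3/2) / (2 * C0) \<and> ln (lam e) / ln e < 1/2 \<and> e < c0"
    unfolding eventually_at_right_field by auto
  show ?thesis
  proof (intro exI[of _ bb] conjI allI impI)
    show "bb > 0" by fact
    fix e assume "0 < e \<and> e < bb"
    hence e0: "0 < e" and he: "lam e < ln (3/2) / (2 * C0)" "ln (lam e) / ln e < 1/2" "e < c0"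
      using hb by auto
    have ec: "e < 1" "e < C1 / C3" "e < 1 / (2 * C3)" "e < 2 * C0 / (5 * C3)" "e < m / K"
      using he(3) unfolding c0_def by simp_all
    note P = pt[OF C_pos e0 ec(1-4) ec(5)[unfolded m_def] K_def E_def lam_pos[OF e0] he(1,2)
               refl refl refl refl]
    show "let \<Lambda> = exp (2 * C0 * lam e);
         A = \<Lambda> * (C2 + C3 * e) * e;
         B = \<Lambda> - 1 - C3 * e\<^sup>2 * (\<Lambda> + 1);
         C = (C2 + C3 * e) * e;
         xm = exp (2 * C0) * ((B\<^sup>2 + 4 * A * C) * C) / B ^ 3;
         xp = exp (- 2 * C0) * (B\<^sup>2 - 2 * A * C) / (A * B);
         xc = exp (2 * C0) * \<Lambda> * xm
     in \<forall>\<sigma> x.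
          (let y = Qact e (a \<sigma>) (b \<sigma>) (\<alpha> e \<sigma>) (\<beta> e \<sigma>) (\<gamma> e \<sigma>) (\<delta> e \<sigma>)
                        (Dact (\<kappa> \<sigma>) x)
           in (\<not> in_Ici 0 x \<longrightarrow> \<not> in_Ici xm y)
            \<and> (\<not> in_Ici xm x \<longrightarrow> \<not> in_Ici xc y)
            \<and> (\<not> in_Ici 0 y \<longrightarrow> \<not> in_Ico 0 xp x))"
      unfolding Let_def
      apply (intro allI)
      subgoal for \<sigma> x
      proof -
        have ent: "\<bar>\<alpha> e \<sigma>\<bar> \<le> C3" "\<bar>\<beta> e \<sigma>\<bar> \<le> C3" "\<bar>\<gamma> e \<sigma>\<bar> \<le> C3" "\<bar>\<delta> e \<sigma>\<bar> \<le> C3"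
          using mat2_entries[OF A_bd, of e \<sigma>] e0 ec(1) by simp_all
        show ?thesis
          using core[where x = x, OF e0 _ P(1,2) E_def C_pos(1) P(3) ent ab_lower ab_upper C_pos(2)
                        kappa_pos kappa_bd refl refl refl refl refl refl P(4,5,6,7)] e0 ec(1)
          by (simp only: Let_def) simp
      qed
      done
  qed
qed

end
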